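(* Let $M$ be a finite set of item types and let $\mathcal{D}=(p_j)_{j\in M}$ be a probability distribution on $M$. There are $n$ agents with valuations $w_i:\mathbb{Z}_+^{M}\to\mathbb{R}_+$ (functions of multisets of items) that are monotone and have the property of diminishing returns. Suppose $m$ items arrive, each drawn independently from $\mathcal{D}$, and let $OPT=\mathbb{E}[OPT(\mathcal{M})]$, where $OPT(\mathcal{M})$ is the maximum of $\sum_i w_i(S_i)$ over partitions of the realized arrival multiset $\mathcal{M}$ into multisets $S_1,\dots,S_n$. Consider the greedy algorithm: if the multisets assigned so far are $(T_1,\dots,T_n)$ when item $j$ arrives, it assigns $j$ to an agent $i$ maximizing $w_i(T_i+j)-w_i(T_i)$. Then the expected welfare of the greedy algorithm is at least $(1-1/e)\,OPT$.
   Context: Multisets over $M$ are identified with vectors in $\mathbb{Z}_+^M$. $T+j$ denotes the multiset $T$ with one extra copy of $j$, and $T+S$ denotes the sum of multiplicities. A function $f:\mathbb{Z}_+^M\to\mathbb{R}$ has the property of diminishing returns if for all $x\le y$ (coordinatewise) and every unit vector $e_j$ one has $f(x+e_j)-f(x)\ge f(y+e_j)-f(y)$. It is monotone if $f(x)\le f(y)$ whenever $x\le y$. *)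

theory Defs
  imports Complex_Main
begin

text \<open>Multisets over the finite item type 'm are vectors 'm \<Rightarrow> nat (i.e. elements of Z_+^M),
  ordered coordinatewise.  T + j adds one copy of j.\<close>

definition add_item :: "('m \<Rightarrow> nat) \<Rightarrow> 'm \<Rightarrow> ('m \<Rightarrow> nat)" where
  "add_item T j = T(j := Suc (T j))"

definition monotone_val :: "(('m \<Rightarrow> nat) \<Rightarrow> real) \<Rightarrow> bool" where
  "monotone_val f \<longleftrightarrow> (\<forall>x y. x \<le> y \<longrightarrow> f x \<le> f y)"

definition diminishing_returns :: "(('m \<Rightarrow> nat) \<Rightarrow> real) \<Rightarrow> bool" where
  "diminishing_returns f \<longleftrightarrow>
     (\<forall>x y j. x \<le> y \<longrightarrow> f (add_item x j) - f x \<ge> f (add_item y j) - f y)"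

definition mset_of :: "'m list \<Rightarrow> ('m \<Rightarrow> nat)" where
  "mset_of xs = (\<lambda>j. count_list xs j)"

definition OPT_of :: "(nat \<Rightarrow> ('m \<Rightarrow> nat) \<Rightarrow> real) \<Rightarrow> nat \<Rightarrow> ('m \<Rightarrow> nat) \<Rightarrow> real" where
  "OPT_of w n X = Max {(\<Sum>i<n. w i (S i)) | S. (\<forall>j. (\<Sum>i<n. S i j) = X j)}"

text \<open>Greedy allocation after the first k items of xs; the agent receiving item x after
  history h (the previously arrived items) is ch h x (tie-breaking rule).\<close>
primrec greedy_alloc ::
  "('m list \<Rightarrow> 'm \<Rightarrow> nat) \<Rightarrow> 'm list \<Rightarrow> nat \<Rightarrow> (nat \<Rightarrow> 'm \<Rightarrow> nat)" where
  "greedy_alloc ch xs 0 = (\<lambda>i. (\<lambda>j. 0))"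
| "greedy_alloc ch xs (Suc k) =
     (let T = greedy_alloc ch xs k; x = xs ! k; i = ch (take k xs) x
      in T(i := add_item (T i) x))"

definition greedy_final :: "('m list \<Rightarrow> 'm \<Rightarrow> nat) \<Rightarrow> 'm list \<Rightarrow> (nat \<Rightarrow> 'm \<Rightarrow> nat)" where
  "greedy_final ch xs = greedy_alloc ch xs (length xs)"

definition is_greedy_rule ::
  "(nat \<Rightarrow> ('m \<Rightarrow> nat) \<Rightarrow> real) \<Rightarrow> nat \<Rightarrow> ('m list \<Rightarrow> 'm \<Rightarrow> nat) \<Rightarrow> bool" where
  "is_greedy_rule w n ch \<longleftrightarrow>
     (\<forall>h x. let T = greedy_final ch h in
        ch h x < n \<and>
        (\<forall>i<n. w i (add_item (T i) x) - w i (T i)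
               \<le> w (ch h x) (add_item (T (ch h x)) x) - w (ch h x) (T (ch h x))))"

definition expect_iid :: "('m::finite \<Rightarrow> real) \<Rightarrow> nat \<Rightarrow> ('m list \<Rightarrow> real) \<Rightarrow> real" where
  "expect_iid p m f = (\<Sum>xs\<in>{xs. length xs = m}. prod_list (map p xs) * f xs)"

end

theory Submission imports Defs "HOL-Library.FuncSet" begin

lemma lists_Suc: "{xs::'a list. length xs = Suc k} = (\<lambda>(x,ys). x#ys) ` (UNIV \<times> {ys. length ys = k})"
  by (auto simp: length_Suc_conv)

lemma E_cons: "expect_iid p (Suc k) f = (\<Sum>x\<in>UNIV. p x * expect_iid p k (\<lambda>ys. f (x#ys)))"
proof -
  have inj: "inj_on (\<lambda>(x,ys). x#ys) (UNIV \<times> {ys::'a list. length ys = k})"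
    by (auto simp: inj_on_def)
  have "expect_iid p (Suc k) f = (\<Sum>(x,ys)\<in>UNIV \<times> {ys. length ys = k}. prod_list (map p (x#ys)) * f (x#ys))"
    unfolding expect_iid_def lists_Suc by (subst sum.reindex[OF inj]) (simp add: case_prod_unfold)
  also have "\<dots> = (\<Sum>x\<in>UNIV. \<Sum>ys\<in>{ys. length ys = k}. p x * (prod_list (map p ys) * f (x#ys)))"
    by (subst sum.cartesian_product[symmetric]) (simp add: mult.assoc)
  also have "\<dots> = (\<Sum>x\<in>UNIV. p x * expect_iid p k (\<lambda>ys. f (x#ys)))"
    unfolding expect_iid_def by (simp add: sum_distrib_left)
  finally show ?thesis .
qed

lemma E_zero: "expect_iid p 0 f = f []"
  unfolding expect_iid_def by simp

lemma E_const: assumes "(\<Sum>j\<in>UNIV. p j) = 1" shows "expect_iid p k (\<lambda>_. c) = c"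
  by (induction k) (simp_all add: E_zero E_cons flip: sum_distrib_right add: assms)

lemma E_add: "expect_iid p k (\<lambda>x. f x + g x) = expect_iid p k f + expect_iid p k g"
  unfolding expect_iid_def by (simp add: distrib_left sum.distrib)

lemma E_cmult: "expect_iid p k (\<lambda>x. c * f x) = c * expect_iid p k f"
  unfolding expect_iid_def by (simp add: sum_distrib_left mult.left_commute)

lemma E_mono: fixes p :: "'a::finite \<Rightarrow> real" and f g :: "'a list \<Rightarrow> real"
  assumes "\<And>j. p j \<ge> 0" "\<And>xs. length xs = k \<Longrightarrow> f xs \<le> g xs"
  shows "expect_iid p k f \<le> expect_iid p k g"
  unfolding expect_iid_def
proof (rule sum_mono)
  fix xs :: "'a list" assume "xs \<in> {xs. length xs = k}"
  then show "prod_list (map p xs) * f xs \<le> prod_list (map p xs) * g xs"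
    using assms by (intro mult_left_mono prod_list_nonneg) auto
qed

lemma E_snoc: "expect_iid p (Suc k) f = expect_iid p k (\<lambda>h. \<Sum>x\<in>UNIV. p x * f (h@[x]))"
proof (induction k arbitrary: f)
  case 0
  then show ?case by (simp add: E_cons E_zero)
next
  case (Suc k)
  show ?case
    apply (subst E_cons)
    apply (subst Suc)
    apply (subst E_cons)
    by simp
qed

lemma E_sumlist: assumes "(\<Sum>j\<in>UNIV. p j) = 1"
  shows "expect_iid p k (\<lambda>ys. sum_list (map D ys)) = real k * (\<Sum>x\<in>UNIV. p x * D x)"
proof (induction k)
  case 0
  then show ?case by (simp add: E_zero)
next
  case (Suc k)
  have "expect_iid p (Suc k) (\<lambda>ys. sum_list (map D ys))
      = (\<Sum>x\<in>UNIV. p x * (D x + real k * (\<Sum>x\<in>UNIV. p x * D x)))"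
    by (simp add: E_cons E_add E_const[OF assms] Suc)
  also have "\<dots> = (\<Sum>x\<in>UNIV. p x * D x) + (\<Sum>x\<in>UNIV. p x) * (real k * (\<Sum>x\<in>UNIV. p x * D x))"
    by (simp add: distrib_left sum.distrib sum_distrib_right)
  finally show ?case using assms by (simp add: algebra_simps)
qed


lemma greedy_alloc_append: "k \<le> length xs \<Longrightarrow> greedy_alloc ch (xs@ys) k = greedy_alloc ch xs k"
proof (induction k)
  case 0 then show ?case by simp
next
  case (Suc k)
  then have "k < length xs" by simp
  then show ?case using Suc by (simp add: Let_def nth_append)
qed

lemma greedy_final_snoc:
  "greedy_final ch (h@[x]) = (let T = greedy_final ch h; i = ch h x in T(i := add_item (T i) x))"
  unfolding greedy_final_def using greedy_alloc_append[of "length h" h ch "[x]"]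
  by (simp add: Let_def)

lemma sum_upd: fixes f :: "'i \<Rightarrow> 'b \<Rightarrow> real" assumes "finite A" "c \<in> A"
  shows "(\<Sum>i\<in>A. f i ((T(c:=v)) i)) = (\<Sum>i\<in>A. f i (T i)) + f c v - f c (T c)"
proof -
  have "(\<Sum>i\<in>A. f i ((T(c:=v)) i)) = f c v + (\<Sum>i\<in>A-{c}. f i ((T(c:=v)) i))"
    using assms by (simp add: sum.remove)
  also have "(\<Sum>i\<in>A-{c}. f i ((T(c:=v)) i)) = (\<Sum>i\<in>A-{c}. f i (T i))"
    by (rule sum.cong) auto
  also have "(\<Sum>i\<in>A. f i (T i)) = f c (T c) + (\<Sum>i\<in>A-{c}. f i (T i))"
    using assms by (simp add: sum.remove)
  ultimately show ?thesis by simp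
qed

lemma add_item_eq: "add_item U j0 = (\<lambda>j. U j + (if j = j0 then 1 else 0))"
  unfolding add_item_def by auto

lemma sum_add_item: "(\<Sum>j\<in>UNIV. add_item U j0 j) = Suc (\<Sum>j\<in>(UNIV::'m::finite set). U j)"
  unfolding add_item_eq by (simp add: sum.distrib)

lemma sum_add_item_real: "(\<Sum>j\<in>UNIV. real (add_item U j0 j) * g j) = (\<Sum>j\<in>(UNIV::'m::finite set). real (U j) * g j) + g j0"
proof -
  have "(\<Sum>j\<in>UNIV. real (add_item U j0 j) * g j) = (\<Sum>j\<in>UNIV. real (U j) * g j + (if j = j0 then g j else 0))"
    by (rule sum.cong) (auto simp: add_item_def distrib_right)
  then show ?thesis by (simp add: sum.distrib)
qed

lemma dr_sum:
  fixes f :: "('m::finite \<Rightarrow> nat) \<Rightarrow> real"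
  assumes dr: "diminishing_returns f"
  shows "f ((\<lambda>j. T j + U j)) - f T \<le> (\<Sum>j\<in>UNIV. real (U j) * (f (add_item T j) - f T))"
proof -
  have "\<forall>U. (\<Sum>j\<in>UNIV. U j) = N \<longrightarrow> f ((\<lambda>j. T j + U j)) - f T \<le> (\<Sum>j\<in>UNIV. real (U j) * (f (add_item T j) - f T))" for N
  proof (induction N)
    case 0
    then show ?case by (simp add: fun_eq_iff)
  next
    case (Suc N)
    show ?case
    proof (intro allI impI)
      fix U :: "'m \<Rightarrow> nat" assume U: "(\<Sum>j\<in>UNIV. U j) = Suc N"
      then obtain j0 where j0: "U j0 > 0"
        by (metis (mono_tags, lifting) Zero_not_Suc gr0I sum.neutral)
      define U' where "U' = U(j0 := U j0 - 1)"
      have UU: "U = add_item U' j0" using j0 unfolding U'_def add_item_def by auto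
      have sU: "(\<Sum>j\<in>UNIV. U' j) = N" using U unfolding UU sum_add_item by simp
      have IH: "f ((\<lambda>j. T j + U' j)) - f T \<le> (\<Sum>j\<in>UNIV. real (U' j) * (f (add_item T j) - f T))"
        using Suc sU by blast
      have e: "(\<lambda>j. T j + U j) = add_item ((\<lambda>j. T j + U' j)) j0" unfolding UU add_item_def by (auto simp: fun_eq_iff)
      have "T \<le> (\<lambda>j. T j + U' j)" by (simp add: le_fun_def)
      then have d: "f (add_item ((\<lambda>j. T j + U' j)) j0) - f ((\<lambda>j. T j + U' j)) \<le> f (add_item T j0) - f T"
        using dr unfolding diminishing_returns_def by blast
      show "f ((\<lambda>j. T j + U j)) - f T \<le> (\<Sum>j\<in>UNIV. real (U j) * (f (add_item T j) - f T))"
        unfolding e using IH d by (subst UU) (simp add: sum_add_item_real)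
    qed
  qed
  then show ?thesis by blast
qed

lemma sumlist_count: "sum_list (map D ys) = (\<Sum>j\<in>(UNIV::'m::finite set). real (count_list ys j) * D j)"
proof (induction ys)
  case Nil
  then show ?case by simp
next
  case (Cons a ys)
  have "(\<Sum>j\<in>UNIV. real (count_list (a#ys) j) * D j) = (\<Sum>j\<in>UNIV. real (count_list ys j) * D j + (if a = j then D j else 0))"
    by (rule sum.cong) (auto simp: distrib_right)
  also have "\<dots> = (\<Sum>j\<in>UNIV. real (count_list ys j) * D j) + D a"
    by (simp add: sum.distrib)
  finally show ?case using Cons by simp
qed


lemma opt_bound:
  fixes w :: "nat \<Rightarrow> ('m::finite \<Rightarrow> nat) \<Rightarrow> real" and T :: "nat \<Rightarrow> 'm \<Rightarrow> nat"
  assumes n: "n > 0"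
    and mono: "\<And>i. i < n \<Longrightarrow> monotone_val (w i)"
    and dr: "\<And>i. i < n \<Longrightarrow> diminishing_returns (w i)"
    and marg: "\<And>i y. i < n \<Longrightarrow> w i (add_item (T i) y) - w i (T i) \<le> D y"
  shows "OPT_of w n (mset_of ys) \<le> (\<Sum>i<n. w i (T i)) + sum_list (map D ys)"
proof -
  let ?X = "mset_of ys"
  let ?A = "{(\<Sum>i<n. w i (S i)) | S. (\<forall>j. (\<Sum>i<n. S i j) = ?X j)}"
  have sub: "?A \<subseteq> (\<lambda>S. \<Sum>i<n. w i (S i)) ` (PiE {..<n} (\<lambda>_. PiE UNIV (\<lambda>j. {0..?X j})))"
  proof
    fix a assume "a \<in> ?A"
    then obtain S where a: "a = (\<Sum>i<n. w i (S i))" and S: "\<forall>j. (\<Sum>i<n. S i j) = ?X j" by blast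
    have "restrict S {..<n} \<in> PiE {..<n} (\<lambda>_. PiE UNIV (\<lambda>j. {0..?X j}))"
    proof (rule restrict_PiE_iff[THEN iffD2], intro ballI)
      fix i assume i: "i \<in> {..<n}"
      have "S i j \<le> ?X j" for j
        using member_le_sum[of i "{..<n}" "\<lambda>i. S i j"] i S by auto
      then show "S i \<in> PiE UNIV (\<lambda>j. {0..?X j})" by auto
    qed
    moreover have "a = (\<Sum>i<n. w i (restrict S {..<n} i))" unfolding a by simp
    ultimately show "a \<in> (\<lambda>S. \<Sum>i<n. w i (S i)) ` (PiE {..<n} (\<lambda>_. PiE UNIV (\<lambda>j. {0..?X j})))"
      by blast
  qed
  have fin: "finite ?A"
    by (rule finite_subset[OF sub]) (intro finite_imageI finite_PiE; simp)
  have ne: "?A \<noteq> {}"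
  proof -
    define S0 where "S0 = (\<lambda>i::nat. \<lambda>j. if i = 0 then ?X j else 0)"
    have "\<forall>j. (\<Sum>i<n. S0 i j) = ?X j"
      using n by (simp add: S0_def)
    then have "(\<Sum>i<n. w i (S0 i)) \<in> ?A" by (intro CollectI exI conjI) (rule refl)
    then show ?thesis by (metis empty_iff)
  qed
  show ?thesis
    unfolding OPT_of_def
  proof (rule Max.boundedI[OF fin ne])
    fix a assume "a \<in> ?A"
    then obtain S where a: "a = (\<Sum>i<n. w i (S i))" and S: "\<forall>j. (\<Sum>i<n. S i j) = ?X j" by blast
    have "w i (S i) \<le> w i (T i) + (\<Sum>j\<in>UNIV. real (S i j) * D j)" if i: "i < n" for i
    proof -
      have "w i (S i) \<le> w i (\<lambda>j. T i j + S i j)"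
        using mono[OF i] unfolding monotone_val_def by (simp add: le_fun_def)
      also have "\<dots> \<le> w i (T i) + (\<Sum>j\<in>UNIV. real (S i j) * (w i (add_item (T i) j) - w i (T i)))"
        using dr_sum[OF dr[OF i], of "T i" "S i"] by simp
      also have "(\<Sum>j\<in>UNIV. real (S i j) * (w i (add_item (T i) j) - w i (T i))) \<le> (\<Sum>j\<in>UNIV. real (S i j) * D j)"
        by (intro sum_mono mult_left_mono marg[OF i]) auto
      finally show ?thesis by simp
    qed
    then have "a \<le> (\<Sum>i<n. w i (T i) + (\<Sum>j\<in>UNIV. real (S i j) * D j))"
      unfolding a by (rule sum_mono) simp
    also have "\<dots> = (\<Sum>i<n. w i (T i)) + (\<Sum>j\<in>UNIV. (\<Sum>i<n. real (S i j)) * D j)"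
      by (simp add: sum.distrib sum_distrib_right sum.swap[of _ "{..<n}"])
    also have "(\<Sum>j\<in>UNIV. (\<Sum>i<n. real (S i j)) * D j) = (\<Sum>j\<in>UNIV. real (?X j) * D j)"
      by (rule sum.cong) (simp_all flip: S)
    also have "\<dots> = sum_list (map D ys)" by (simp add: sumlist_count mset_of_def)
    finally show "a \<le> (\<Sum>i<n. w i (T i)) + sum_list (map D ys)" .
  qed
qed


lemma fin_aux:
  fixes Ob G :: real
  assumes "Ob \<le> G \<or> Ob \<le> 0" "0 \<le> G"
  shows "(1 - exp (-1)) * Ob \<le> G"
proof -
  have e: "0 < exp (-1::real)" "exp (-1::real) \<le> 1" by simp_all
  have eq: "(1 - exp (-1)) * Ob = Ob - exp (-1) * Ob" by (simp add: algebra_simps)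
  show ?thesis
  proof (cases "Ob \<ge> 0")
    case True
    then have "exp (-1) * Ob \<ge> 0" using e by simp
    then show ?thesis using assms True eq by linarith
  next
    case False
    then have "(1 - exp (-1)) * Ob \<le> 0" using e by (intro mult_nonneg_nonpos) simp_all
    then show ?thesis using assms by linarith
  qed
qed

theorem theorem4p3:
  fixes p :: "'m::finite \<Rightarrow> real"
    and w :: "nat \<Rightarrow> ('m \<Rightarrow> nat) \<Rightarrow> real"
    and n m :: nat
    and ch :: "'m list \<Rightarrow> 'm \<Rightarrow> nat"
  assumes p_nonneg: "\<And>j. p j \<ge> 0"
    and p_sum: "(\<Sum>j\<in>UNIV. p j) = 1"
    and w_nonneg: "\<And>i x. i < n \<Longrightarrow> w i x \<ge> 0"
    and w_mono: "\<And>i. i < n \<Longrightarrow> monotone_val (w i)"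
    and w_dr: "\<And>i. i < n \<Longrightarrow> diminishing_returns (w i)"
    and greedy: "is_greedy_rule w n ch"
  shows "expect_iid p m (\<lambda>xs. \<Sum>i<n. w i (greedy_final ch xs i))
           \<ge> (1 - exp (-1)) * expect_iid p m (\<lambda>xs. OPT_of w n (mset_of xs))"
proof -
  define G where "G h = (\<Sum>i<n. w i (greedy_final ch h i))" for h
  define g where "g t = expect_iid p t G" for t
  define Ob where "Ob = expect_iid p m (\<lambda>xs. OPT_of w n (mset_of xs))"
  define Dl where "Dl h x = (let c = ch h x; T = greedy_final ch h in w c (add_item (T c) x) - w c (T c))" for h x
  have gr: "ch h x < n" "\<And>i. i < n \<Longrightarrow> w i (add_item (greedy_final ch h i) x) - w i (greedy_final ch h i) \<le> Dl h x" for h x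
    using greedy unfolding is_greedy_rule_def Dl_def Let_def by (meson)+
  have n: "n > 0" using gr(1)[of "[]" undefined] by simp
  have Gsnoc: "G (h@[x]) = G h + Dl h x" for h x
    unfolding G_def greedy_final_snoc Let_def Dl_def
    using sum_upd[of "{..<n}" "ch h x" w "greedy_final ch h"] gr(1)[of h x] by simp
  have Gnn: "G h \<ge> 0" for h unfolding G_def by (intro sum_nonneg w_nonneg) simp
  have gS: "g (Suc t) = g t + expect_iid p t (\<lambda>h. \<Sum>x\<in>UNIV. p x * Dl h x)" for t
  proof -
    have "g (Suc t) = expect_iid p t (\<lambda>h. \<Sum>x\<in>UNIV. p x * (G h + Dl h x))"
      unfolding g_def E_snoc Gsnoc ..
    also have "\<dots> = expect_iid p t (\<lambda>h. G h + (\<Sum>x\<in>UNIV. p x * Dl h x))"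
      by (simp add: distrib_left sum.distrib flip: sum_distrib_right add: p_sum)
    finally show ?thesis unfolding g_def E_add .
  qed
  have Obound: "Ob \<le> G h + real m * (\<Sum>x\<in>UNIV. p x * Dl h x)" for h
  proof -
    have "Ob \<le> expect_iid p m (\<lambda>ys. G h + sum_list (map (Dl h) ys))"
      unfolding Ob_def G_def
      by (intro E_mono p_nonneg opt_bound[OF n w_mono w_dr] gr(2))
    also have "\<dots> = G h + real m * (\<Sum>x\<in>UNIV. p x * Dl h x)"
      unfolding E_add E_const[OF p_sum] E_sumlist[OF p_sum] ..
    finally show ?thesis .
  qed
  have step: "Ob \<le> g t + real m * (g (Suc t) - g t)" for t
  proof -
    have "Ob = expect_iid p t (\<lambda>_. Ob)" by (simp add: E_const[OF p_sum])
    also have "\<dots> \<le> expect_iid p t (\<lambda>h. G h + real m * (\<Sum>x\<in>UNIV. p x * Dl h x))"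
      by (intro E_mono p_nonneg Obound)
    also have "\<dots> = g t + real m * (g (Suc t) - g t)"
      unfolding E_add E_cmult using gS[of t] unfolding g_def by simp
    finally show ?thesis .
  qed
  have g0: "g 0 \<ge> 0" unfolding g_def E_zero by (rule Gnn)
  have gm: "g m \<ge> 0"
  proof -
    have "0 = expect_iid p m (\<lambda>_. 0)" by (simp add: E_const[OF p_sum])
    also have "\<dots> \<le> g m" unfolding g_def by (intro E_mono p_nonneg Gnn)
    finally show ?thesis .
  qed
  have goal: "(1 - exp (-1)) * Ob \<le> g m"
  proof (cases "m = 0")
    case True
    then have "Ob \<le> g m" using step[of 0] by simp
    then show ?thesis using gm fin_aux by blast
  next
    case False
    define r where "r = 1 - 1 / real m"
    have r0: "r \<ge> 0" "r \<le> 1" using False by (auto simp: r_def)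
    have rec: "Ob - g t \<le> r ^ t * (Ob - g 0)" for t
    proof (induction t)
      case 0 then show ?case by simp
    next
      case (Suc t)
      have "Ob - g (Suc t) \<le> r * (Ob - g t)"
        using step[of t] False by (simp add: r_def field_simps)
      also have "\<dots> \<le> r * (r ^ t * (Ob - g 0))" by (rule mult_left_mono[OF Suc r0(1)])
      finally show ?case by simp
    qed
    have rm: "r ^ m \<le> exp (-1)"
    proof -
      have "r \<le> exp (- 1 / real m)" unfolding r_def using exp_ge_add_one_self[of "- 1 / real m"] by simp
      then have "r ^ m \<le> exp (- 1 / real m) ^ m" by (rule power_mono[OF _ r0(1)])
      also have "\<dots> = exp (real m * (- 1 / real m))" by (rule exp_of_nat_mult[symmetric])
      also have "\<dots> = exp (-1)" using False by simp
      finally show ?thesis .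
    qed
    have rmn: "r ^ m \<ge> 0" using r0 by simp
    show ?thesis
    proof (cases "Ob - g 0 \<ge> 0")
      case True
      have "Ob - g m \<le> exp (-1) * (Ob - g 0)"
        using rec[of m] mult_right_mono[OF rm True] by linarith
      also have "\<dots> \<le> exp (-1) * Ob" using g0 by (simp add: mult_left_mono)
      finally show ?thesis by (simp add: algebra_simps)
    next
      case False
      have "r ^ m * (Ob - g 0) \<le> 0" using False rmn by (simp add: mult_nonneg_nonpos)
      then have "Ob \<le> g m" using rec[of m] by linarith
      then show ?thesis using gm fin_aux by blast
    qed
  qed
  then show ?thesis unfolding g_def Ob_def G_def .
qed

end
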